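(* Let $N\ge2$ be an integer and let $\sigma$ be a finite nonempty set of functions $\mathbb{Z}_2\to\mathbb{Z}_N$ that is totally indistinguishable. Then the standard oracle operators $\{U_f: f\in\sigma\}$ are not unambiguously distinguishable.
   Context: A set $\sigma$ of functions $\mathbb{Z}_M\to\mathbb{Z}_N$ is totally indistinguishable if for every $x\in\mathbb{Z}_M$ and every $f\in\sigma$ there exists $f'\in\sigma$ with $f'\neq f$ and $f'(x)=f(x)$. Let $\mathcal{H}_2,\mathcal{H}_N$ be Hilbert spaces with orthonormal bases $\{|x\rangle\}_{x\in\mathbb{Z}_2}$, $\{|y\rangle\}_{y\in\mathbb{Z}_N}$. For $f:\mathbb{Z}_2\to\mathbb{Z}_N$ the standard oracle operator is the unitary $U_f$ on $\mathcal{H}_2\otimes\mathcal{H}_N$ with $U_f|x\rangle\otimes|y\rangle=|x\rangle\otimes|y\oplus f(x)\rangle$, $\oplus$ being addition mod $N$. A finite list of unitary operators $W_1,\ldots,W_K$ on a finite-dimensional Hilbert space $\mathcal{H}$ is called unambiguously distinguishable if there exist a finite-dimensional ancilla space $\mathcal{H}_A$ and a unit vector $|\psi\rangle\in\mathcal{H}\otimes\mathcal{H}_A$ such that the vectors $(W_j\otimes\mathbb{1}_A)|\psi\rangle$ are linearly independent. *)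

theory Defs
  imports Complex_Main "HOL-Library.FuncSet"
begin

text \<open>Functions Z_M -> Z_N are represented as extensional functions
  nat => nat in {0..<M} ->E {0..<N}.  Elements of Z_M are 0..M-1.\<close>

definition totally_indist :: "nat set \<Rightarrow> (nat \<Rightarrow> nat) set \<Rightarrow> bool" where
  "totally_indist X \<sigma> \<longleftrightarrow>
     (\<forall>x\<in>X. \<forall>f\<in>\<sigma>. \<exists>f'\<in>\<sigma>. f' \<noteq> f \<and> f' x = f x)"

text \<open>An operator on a finite-dimensional Hilbert space with orthonormal basis
  indexed by the finite set B is given by its matrix W b b' = <b|W|b'>.
  Vectors of H (x) H_A, where H_A has orthonormal basis indexed by {0..<d},
  are functions on B \<times> {0..<d} (extended by zero).\<close>

definition tensor_id_apply ::
  "'b set \<Rightarrow> ('b \<Rightarrow> 'b \<Rightarrow> complex) \<Rightarrow> ('b \<times> nat \<Rightarrow> complex) \<Rightarrow> ('b \<times> nat \<Rightarrow> complex)" where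
  "tensor_id_apply B W \<psi> = (\<lambda>(b, a). \<Sum>b'\<in>B. W b b' * \<psi> (b', a))"

text \<open>Unambiguous distinguishability of the family (W i) for i in I (the list
  W_1..W_K indexed by I): some finite-dimensional ancilla (dimension d) and
  unit vector psi such that the vectors (W i (x) 1) psi are linearly independent.\<close>

definition unamb_dist ::
  "'b set \<Rightarrow> 'i set \<Rightarrow> ('i \<Rightarrow> 'b \<Rightarrow> 'b \<Rightarrow> complex) \<Rightarrow> bool" where
  "unamb_dist B I W \<longleftrightarrow>
     (\<exists>d::nat. d \<ge> 1 \<and> (\<exists>\<psi> :: 'b \<times> nat \<Rightarrow> complex.
        (\<forall>p. p \<notin> B \<times> {0..<d} \<longrightarrow> \<psi> p = 0) \<and>
        (\<Sum>p\<in>B \<times> {0..<d}. (cmod (\<psi> p))\<^sup>2) = 1 \<and>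
        (\<forall>c :: 'i \<Rightarrow> complex.
           (\<forall>p\<in>B \<times> {0..<d}. (\<Sum>i\<in>I. c i * tensor_id_apply B (W i) \<psi> p) = 0)
           \<longrightarrow> (\<forall>i\<in>I. c i = 0))))"

text \<open>Standard query operator U_f |x>|y> = |x>|y + f x mod N>, on basis {0..<2} \<times> {0..<N}.\<close>

definition std_oracle_op :: "nat \<Rightarrow> (nat \<Rightarrow> nat) \<Rightarrow> (nat \<times> nat) \<Rightarrow> (nat \<times> nat) \<Rightarrow> complex" where
  "std_oracle_op N f = (\<lambda>(x, y) (x', y'). if x = x' \<and> y = (y' + f x') mod N then 1 else 0)"

end

theory Submission imports Defs "HOL-Library.Function_Algebras" begin

lemma fiber_count:
  assumes fin: "finite S" and ind: "\<forall>f\<in>S. \<exists>f'\<in>S. f' \<noteq> f \<and> h f' = h f"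
  shows "2 * card (h ` S) \<le> card S"
proof -
  have "card S = (\<Sum>y\<in>h ` S. \<Sum>x\<in>{x. x \<in> S \<and> h x = y}. (1::nat))"
    using sum.group[OF fin finite_imageI[OF fin] subset_refl, where g=h and h="\<lambda>_. 1::nat"] by simp
  also have "\<dots> = (\<Sum>y\<in>h ` S. card {x. x \<in> S \<and> h x = y})" by simp
  also have "\<dots> \<ge> (\<Sum>y\<in>h ` S. 2)"
  proof (rule sum_mono)
    fix y assume "y \<in> h ` S"
    then obtain f where f: "f \<in> S" "h f = y" by auto
    then obtain f' where f': "f' \<in> S" "f' \<noteq> f" "h f' = h f" using ind by blast
    have "{f, f'} \<subseteq> {x. x \<in> S \<and> h x = y}" using f f' by auto
    hence "card {f, f'} \<le> card {x. x \<in> S \<and> h x = y}" by (rule card_mono[rotated]) (use fin in auto)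
    thus "2 \<le> card {x. x \<in> S \<and> h x = y}" using f' by simp
  qed
  finally show ?thesis by simp
qed

definition fscale :: "complex \<Rightarrow> ('x \<Rightarrow> complex) \<Rightarrow> ('x \<Rightarrow> complex)" where
  "fscale c v = (\<lambda>x. c * v x)"

interpretation fvs: vector_space "fscale :: complex \<Rightarrow> ('x \<Rightarrow> complex) \<Rightarrow> _"
  by unfold_locales (auto simp: fscale_def fun_eq_iff algebra_simps)

lemma sum_fun_apply': "(\<Sum>i\<in>A. F i) x = (\<Sum>i\<in>A. F i x)" for F :: "'i \<Rightarrow> 'x \<Rightarrow> complex"
  by (induction A rule: infinite_finite_induct) auto

lemma abstract_dep:
  fixes \<sigma> :: "(nat \<Rightarrow> nat) set" and u v :: "nat \<Rightarrow> 'x \<Rightarrow> complex"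
  assumes fin: "finite \<sigma>" and ne: "\<sigma> \<noteq> {}"
    and ti: "totally_indist {0..<2} \<sigma>"
  shows "\<exists>c. (\<forall>p. (\<Sum>f\<in>\<sigma>. c f * (u (f 0) p + v (f 1) p)) = 0) \<and> (\<exists>f\<in>\<sigma>. c f \<noteq> 0)"
proof -
  define g where "g f = u (f 0) + v (f 1)" for f :: "nat \<Rightarrow> nat"
  have gp: "g f p = u (f 0) p + v (f 1) p" for f p by (simp add: g_def)
  have key: "\<exists>c. (\<Sum>f\<in>\<sigma>. fscale (c f) (g f)) = 0 \<and> (\<exists>f\<in>\<sigma>. c f \<noteq> 0)"
  proof (cases "inj_on g \<sigma>")
    case False
    then obtain f f' where ff: "f \<in> \<sigma>" "f' \<in> \<sigma>" "f \<noteq> f'" "g f = g f'"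
      unfolding inj_on_def by blast
    define c where "c h = (if h = f then 1 else if h = f' then -1 else (0::complex))" for h
    have "(\<Sum>h\<in>\<sigma>. fscale (c h) (g h)) = (\<Sum>h\<in>{f,f'}. fscale (c h) (g h))"
      by (rule sum.mono_neutral_right) (use fin ff in \<open>auto simp: c_def fscale_def zero_fun_def\<close>)
    also have "\<dots> = fscale 1 (g f) + fscale (-1) (g f')" using ff by (simp add: c_def)
    also have "\<dots> = 0" unfolding ff(4) by (simp add: fscale_def fun_eq_iff)
    finally show ?thesis using ff by (intro exI[of _ c]) (auto simp: c_def)
  next
    case True
    define L where "L = (\<lambda>f. f 0) ` \<sigma>"
    define R where "R = (\<lambda>f. f (1::nat)) ` \<sigma>"
    have cL: "2 * card L \<le> card \<sigma>" unfolding L_def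
      by (rule fiber_count[OF fin]) (use ti in \<open>auto simp: totally_indist_def\<close>)
    have cR: "2 * card R \<le> card \<sigma>" unfolding R_def
      by (rule fiber_count[OF fin]) (use ti in \<open>auto simp: totally_indist_def\<close>)
    obtain b0 where b0: "b0 \<in> R" using ne R_def by auto
    have finR: "finite R" "finite L" using fin by (auto simp: R_def L_def)
    define S where "S = (\<lambda>a. u a + v b0) ` L \<union> (\<lambda>b. v b - v b0) ` (R - {b0})"
    have finS: "finite S" using finR by (simp add: S_def)
    have "card S \<le> card ((\<lambda>a. u a + v b0) ` L) + card ((\<lambda>b. v b - v b0) ` (R - {b0}))"
      unfolding S_def by (rule card_Un_le)
    also have "\<dots> \<le> card L + card (R - {b0})"
      by (intro add_mono card_image_le) (use finR in auto)
    also have "\<dots> = card L + card R - 1" using b0 finR card_gt_0_iff[of R] by auto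
    finally have cS0: "card S \<le> card L + card R - 1" .
    have "card R > 0" using b0 finR by (auto simp: card_gt_0_iff)
    hence cS: "card S < card \<sigma>" using cS0 cL cR by linarith
    have sub: "g ` \<sigma> \<subseteq> fvs.span S"
    proof
      fix w assume "w \<in> g ` \<sigma>"
      then obtain f where f: "f \<in> \<sigma>" "w = g f" by auto
      have e: "g f = (u (f 0) + v b0) + (v (f 1) - v b0)" by (simp add: g_def)
      have "u (f 0) + v b0 \<in> fvs.span S" using f by (intro fvs.span_base) (auto simp: S_def L_def)
      moreover have "v (f 1) - v b0 \<in> fvs.span S"
      proof (cases "f 1 = b0")
        case True thus ?thesis using fvs.span_zero by simp
      next
        case False thus ?thesis using f by (intro fvs.span_base) (auto simp: S_def R_def)
      qed
      ultimately show "w \<in> fvs.span S" using e f fvs.span_add by metis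
    qed
    have "\<not> fvs.independent (g ` \<sigma>)"
    proof
      assume "fvs.independent (g ` \<sigma>)"
      from fvs.independent_span_bound[OF finS this sub] have "card (g ` \<sigma>) \<le> card S" by simp
      thus False using cS card_image[OF True] by simp
    qed
    then obtain t w where tw: "finite t" "t \<subseteq> g ` \<sigma>" "(\<Sum>x\<in>t. fscale (w x) x) = 0" "\<exists>x\<in>t. w x \<noteq> 0"
      unfolding fvs.dependent_explicit by blast
    define c where "c f = (if g f \<in> t then w (g f) else 0)" for f
    define \<sigma>' where "\<sigma>' = {f\<in>\<sigma>. g f \<in> t}"
    have t_eq: "t = g ` \<sigma>'" using tw(2) by (auto simp: \<sigma>'_def)
    have "(\<Sum>f\<in>\<sigma>. fscale (c f) (g f)) = (\<Sum>f\<in>\<sigma>'. fscale (c f) (g f))"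
      by (rule sum.mono_neutral_right) (use fin in \<open>auto simp: \<sigma>'_def c_def fscale_def zero_fun_def\<close>)
    also have "\<dots> = (\<Sum>f\<in>\<sigma>'. fscale (w (g f)) (g f))"
      by (rule sum.cong) (auto simp: \<sigma>'_def c_def)
    also have "\<dots> = (\<Sum>x\<in>t. fscale (w x) x)" unfolding t_eq
      by (rule sum.reindex[symmetric, unfolded comp_def]) (use True in \<open>auto simp: \<sigma>'_def intro: inj_on_subset\<close>)
    also have "\<dots> = 0" by (fact tw(3))
    finally show ?thesis using tw(4) tw(2) by (intro exI[of _ c]) (auto simp: c_def)
  qed
  then obtain c where c: "(\<Sum>f\<in>\<sigma>. fscale (c f) (g f)) = 0" "\<exists>f\<in>\<sigma>. c f \<noteq> 0" by blast
  show ?thesis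
  proof (intro exI[of _ c] conjI allI)
    fix p
    have "(\<Sum>f\<in>\<sigma>. fscale (c f) (g f)) p = 0" using c(1) by simp
    thus "(\<Sum>f\<in>\<sigma>. c f * (u (f 0) p + v (f 1) p)) = 0"
      by (simp add: sum_fun_apply' fscale_def gp)
  qed (use c in auto)
qed

definition Uc :: "nat \<Rightarrow> nat \<Rightarrow> ((nat \<times> nat) \<times> nat \<Rightarrow> complex) \<Rightarrow> nat \<Rightarrow> (nat \<times> nat) \<times> nat \<Rightarrow> complex" where
  "Uc N x0 \<psi> k = (\<lambda>((x,y),a). if x = x0 then (\<Sum>y'\<in>{0..<N}. if y = (y' + k) mod N then \<psi> ((x0,y'),a) else 0) else 0)"

lemma decomp:
  "tensor_id_apply ({0..<2} \<times> {0..<N}) (std_oracle_op N f) \<psi> p = Uc N 0 \<psi> (f 0) p + Uc N 1 \<psi> (f 1) p"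
proof -
  obtain x y a where p: "p = ((x,y),a)" by (metis prod.collapse)
  have "tensor_id_apply ({0..<2} \<times> {0..<N}) (std_oracle_op N f) \<psi> p =
     (\<Sum>x'\<in>{0..<2}. \<Sum>y'\<in>{0..<N}. (if x = x' \<and> y = (y' + f x') mod N then 1 else 0) * \<psi> ((x',y'),a))"
    unfolding p tensor_id_apply_def std_oracle_op_def by (simp add: sum.cartesian_product split_beta)
  also have "\<dots> = (\<Sum>x'\<in>{0,1}. \<Sum>y'\<in>{0..<N}. (if x = x' \<and> y = (y' + f x') mod N then 1 else 0) * \<psi> ((x',y'),a))"
    by (rule sum.cong) auto
  also have "\<dots> = Uc N 0 \<psi> (f 0) p + Uc N 1 \<psi> (f 1) p"
    unfolding p Uc_def by (auto intro: sum.cong)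
  finally show ?thesis .
qed

theorem theorem5:
  fixes N :: nat and \<sigma> :: "(nat \<Rightarrow> nat) set"
  assumes "N \<ge> 2"
    and "finite \<sigma>" and "\<sigma> \<noteq> {}"
    and "\<sigma> \<subseteq> {0..<2} \<rightarrow>\<^sub>E {0..<N}"
    and "totally_indist {0..<2} \<sigma>"
  shows "\<not> unamb_dist ({0..<2} \<times> {0..<N}) \<sigma> (std_oracle_op N)"
proof
  assume "unamb_dist ({0..<2} \<times> {0..<N}) \<sigma> (std_oracle_op N)"
  then obtain d \<psi> where indep: "\<forall>c :: (nat \<Rightarrow> nat) \<Rightarrow> complex.
           (\<forall>p\<in>({0..<2} \<times> {0..<N}) \<times> {0..<d}. (\<Sum>i\<in>\<sigma>. c i * tensor_id_apply ({0..<2} \<times> {0..<N}) (std_oracle_op N i) \<psi> p) = 0)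
           \<longrightarrow> (\<forall>i\<in>\<sigma>. c i = 0)"
    unfolding unamb_dist_def by blast
  obtain c where c: "\<forall>p. (\<Sum>f\<in>\<sigma>. c f * (Uc N 0 \<psi> (f 0) p + Uc N 1 \<psi> (f 1) p)) = 0" "\<exists>f\<in>\<sigma>. c f \<noteq> 0"
    using abstract_dep[OF assms(2,3,5)] by blast
  have "\<forall>i\<in>\<sigma>. c i = 0" using indep c(1) by (simp add: decomp)
  thus False using c(2) by blast
qed

end
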